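(* Let $U\subset X$ be $p$-path open and $E\subset U$. Then $\mathrm{Mod}_p(\Gamma_E^U)=\mathrm{Mod}_p(\Gamma_E^X)$.
   Context: Here $1\le p<\infty$ and $X=(X,d,\mu)$ is a metric space with a positive complete Borel measure $\mu$ such that $0<\mu(B)<\infty$ for all open balls $B$ (no doubling or Poincaré assumption). Curves are nonconstant, compact, rectifiable curves $\gamma:[0,l_\gamma]\to X$ parametrized by arc length. The $p$-modulus of a family $\Gamma$ of curves is $\mathrm{Mod}_p(\Gamma)=\inf\int_X\rho^p\,d\mu$ over nonnegative Borel functions $\rho$ with $\int_\gamma\rho\,ds\ge1$ for all $\gamma\in\Gamma$; a property holds for $p$-a.e. curve if the family of curves where it fails has $p$-modulus zero. A set $U$ is $p$-path open if for $p$-a.e. curve $\gamma:[0,l_\gamma]\to X$, the set $\gamma^{-1}(U)$ is relatively open in $[0,l_\gamma]$. For $E\subset U$, $\Gamma_E^U$ denotes the family of curves $\gamma:[0,l_\gamma]\to U$ with $\gamma^{-1}(E)\ne\emptyset$. *)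

theory Defs
  imports "HOL-Analysis.Analysis"
begin

definition curve_length :: "(real \<Rightarrow> 'a::metric_space) \<Rightarrow> real \<Rightarrow> real \<Rightarrow> ereal" where
  "curve_length g a b =
     (SUP ts \<in> {ts. sorted ts \<and> ts \<noteq> [] \<and> hd ts = a \<and> last ts = b}.
        ereal (\<Sum>i<length ts - 1. dist (g (ts ! i)) (g (ts ! Suc i))))"

text \<open>A curve is a pair (l, g) with l > 0 and g : [0,l] \<rightarrow> X parametrized by arc length
  (so it is nonconstant, compact, rectifiable). Values of g outside [0,l] are irrelevant.\<close>
definition arclength_curve :: "real \<times> (real \<Rightarrow> 'a::metric_space) \<Rightarrow> bool" where
  "arclength_curve c \<longleftrightarrow> fst c > 0 \<and>
     (\<forall>s t. 0 \<le> s \<longrightarrow> s \<le> t \<longrightarrow> t \<le> fst c \<longrightarrow> curve_length (snd c) s t = ereal (t - s))"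

definition curves :: "(real \<times> (real \<Rightarrow> 'a::metric_space)) set" where
  "curves = {c. arclength_curve c}"

definition line_integral :: "('a \<Rightarrow> ennreal) \<Rightarrow> real \<times> (real \<Rightarrow> 'a) \<Rightarrow> ennreal" where
  "line_integral \<rho> c = (\<integral>\<^sup>+ t. \<rho> (snd c t) * indicator {0..fst c} t \<partial>lborel)"

definition epowr :: "ennreal \<Rightarrow> real \<Rightarrow> ennreal" where
  "epowr x p = (if x = \<infinity> then \<infinity> else ennreal (enn2real x powr p))"

definition admissible :: "(real \<times> (real \<Rightarrow> 'a::metric_space)) set \<Rightarrow> ('a \<Rightarrow> ennreal) \<Rightarrow> bool" where
  "admissible \<Gamma> \<rho> \<longleftrightarrow> \<rho> \<in> borel_measurable borel \<and> (\<forall>c\<in>\<Gamma>. line_integral \<rho> c \<ge> 1)"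

definition Mod :: "real \<Rightarrow> 'a::metric_space measure \<Rightarrow> (real \<times> (real \<Rightarrow> 'a)) set \<Rightarrow> ennreal" where
  "Mod p \<mu> \<Gamma> = (INF \<rho> \<in> {\<rho>. admissible \<Gamma> \<rho>}. \<integral>\<^sup>+ x. epowr (\<rho> x) p \<partial>\<mu>)"

definition p_path_open :: "real \<Rightarrow> 'a::metric_space measure \<Rightarrow> 'a set \<Rightarrow> bool" where
  "p_path_open p \<mu> U \<longleftrightarrow>
     Mod p \<mu> {c \<in> curves. \<not> openin (top_of_set {0..fst c}) ({0..fst c} \<inter> snd c -` U)} = 0"

definition curves_meeting :: "'a::metric_space set \<Rightarrow> 'a set \<Rightarrow> (real \<times> (real \<Rightarrow> 'a)) set" where
  "curves_meeting E U = {c \<in> curves. snd c ` {0..fst c} \<subseteq> U \<and> snd c ` {0..fst c} \<inter> E \<noteq> {}}"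

definition mms :: "'a::metric_space measure \<Rightarrow> bool" where
  "mms \<mu> \<longleftrightarrow> space \<mu> = UNIV \<and> sets borel \<subseteq> sets \<mu> \<and>
     (\<forall>N \<in> null_sets \<mu>. \<forall>A. A \<subseteq> N \<longrightarrow> A \<in> sets \<mu>) \<and>
     (\<forall>x r. r > 0 \<longrightarrow> 0 < emeasure \<mu> (ball x r) \<and> emeasure \<mu> (ball x r) < \<infinity>)"

end

theory Submission
  imports Defs
begin

lemma shift_length:
  "curve_length (\<lambda>t. g (a + t)) s t = curve_length g (a+s) (a+t)"
proof -
  let ?S1 = "{ts. sorted ts \<and> ts \<noteq> [] \<and> hd ts = s \<and> last ts = t}"
  let ?S2 = "{ts. sorted ts \<and> ts \<noteq> [] \<and> hd ts = a+s \<and> last ts = a+t}"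
  have eq: "?S1 = map (\<lambda>x. x - a) ` ?S2"
  proof
    show "?S1 \<subseteq> map (\<lambda>x. x - a) ` ?S2"
    proof
      fix ts assume ts: "ts \<in> ?S1"
      have "map (\<lambda>x. x + a) ts \<in> ?S2" using ts
        by (auto simp: sorted_map hd_map last_map)
      moreover have "ts = map (\<lambda>x. x - a) (map (\<lambda>x. x + a) ts)" by (simp add: comp_def)
      ultimately show "ts \<in> map (\<lambda>x. x - a) ` ?S2" by blast
    qed
    show "map (\<lambda>x. x - a) ` ?S2 \<subseteq> ?S1"
      by (auto simp: sorted_map hd_map last_map monoI)
  qed
  have F: "(\<Sum>i<length (map (\<lambda>x. x - a) ts) - 1. dist (g (a + map (\<lambda>x. x - a) ts ! i)) (g (a + map (\<lambda>x. x - a) ts ! Suc i)))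
     = (\<Sum>i<length ts - 1. dist (g (ts ! i)) (g (ts ! Suc i)))" for ts
    by (rule sum.cong) auto
  show ?thesis
    unfolding curve_length_def eq image_image F ..
qed

lemma lip:
  assumes "arclength_curve (l,g)" "0 \<le> s" "s \<le> t" "t \<le> l"
  shows "dist (g s) (g t) \<le> t - s"
proof -
  have "ereal (dist (g s) (g t)) \<le> curve_length g s t"
    unfolding curve_length_def
    by (rule SUP_upper2[where i="[s,t]"]) (use assms in auto)
  also have "\<dots> = ereal (t - s)" using assms unfolding arclength_curve_def by auto
  finally show ?thesis by simp
qed

lemma cont:
  assumes "arclength_curve (l,g)"
  shows "continuous_on {0..l} g"
  unfolding continuous_on_iff
proof (intro ballI allI impI)
  fix x e assume x: "x \<in> {0..l}" and e: "(0::real) < e"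
  show "\<exists>d>0. \<forall>x'\<in>{0..l}. dist x' x < d \<longrightarrow> dist (g x') (g x) < e"
  proof (intro exI[of _ e] conjI ballI impI)
    fix y assume y: "y \<in> {0..l}" "dist y x < e"
    show "dist (g y) (g x) < e"
    proof (cases "y \<le> x")
      case True
      then have "dist (g y) (g x) \<le> x - y" using lip[OF assms, of y x] x y by auto
      then show ?thesis using y(2) by (auto simp: dist_real_def)
    next
      case False
      then have "dist (g x) (g y) \<le> y - x" using lip[OF assms, of x y] x y by auto
      then show ?thesis using y(2) by (auto simp: dist_real_def dist_commute)
    qed
  qed (use e in auto)
qed

lemma subcurve_curve:
  assumes "arclength_curve (l,g)" "0 \<le> a" "a < b" "b \<le> l"
  shows "arclength_curve (b-a, \<lambda>t. g (a+t))"
  using assms unfolding arclength_curve_def by (auto simp: shift_length)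

lemma subcurve_integral:
  assumes c: "arclength_curve (l,g)" and ab: "0 \<le> a" "a \<le> b" "b \<le> l"
    and rho: "\<rho> \<in> borel_measurable borel"
  shows "line_integral \<rho> (b-a, \<lambda>t. g (a+t)) \<le> line_integral \<rho> (l,g)"
proof -
  define cl where "cl t = max 0 (min l t)" for t
  define h where "h t = \<rho> (g (cl t)) * indicator {0..l} t" for t
  have l0: "0 \<le> l" using ab by auto
  have ccl: "continuous_on UNIV cl" unfolding cl_def by (intro continuous_intros)
  have "continuous_on UNIV (g \<circ> cl)"
    by (rule continuous_on_compose[OF ccl continuous_on_subset[OF cont[OF c]]])
       (auto simp: cl_def l0)
  then have gm: "(g \<circ> cl) \<in> borel_measurable borel" by (rule borel_measurable_continuous_onI)
  have hm: "h \<in> borel_measurable borel"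
    unfolding h_def using measurable_comp[OF gm rho] by (simp add: comp_def)
  have eqh: "line_integral \<rho> (l,g) = (\<integral>\<^sup>+ t. h t \<partial>lborel)"
    unfolding line_integral_def h_def
    by (rule nn_integral_cong) (auto simp: cl_def indicator_def)
  also have "\<dots> = (\<integral>\<^sup>+ x. h (a + 1 * x) \<partial>lborel)"
    using nn_integral_real_affine[OF hm, of 1 a] by simp
  finally have eq2: "line_integral \<rho> (l,g) = (\<integral>\<^sup>+ x. h (a + x) \<partial>lborel)" by simp
  have "line_integral \<rho> (b-a, \<lambda>t. g (a+t)) \<le> (\<integral>\<^sup>+ x. h (a + x) \<partial>lborel)"
    unfolding line_integral_def
    by (rule nn_integral_mono) (use ab in \<open>auto simp: h_def cl_def indicator_def\<close>)
  then show ?thesis using eq2 by simp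
qed

lemma epowr_meas: "(\<lambda>x. epowr x p) \<in> borel_measurable borel"
  unfolding epowr_def by measurable

lemma meas_mu:
  assumes "mms \<mu>" "f \<in> borel_measurable borel"
  shows "f \<in> borel_measurable \<mu>"
  using assms unfolding mms_def measurable_def by auto

lemma Mod_mono: "\<Gamma>1 \<subseteq> \<Gamma>2 \<Longrightarrow> Mod p \<mu> \<Gamma>1 \<le> Mod p \<mu> \<Gamma>2"
  unfolding Mod_def admissible_def by (rule INF_superset_mono) auto

lemma epowr_max: "epowr (max a b) p \<le> epowr a p + epowr b p"
  by (cases "a \<le> b") (auto simp: max_def add_increasing)

theorem lemma3p4:
  fixes \<mu> :: "'a::metric_space measure" and p :: real and U E :: "'a set"
  assumes "1 \<le> p" and "mms \<mu>"
    and "p_path_open p \<mu> U" and "E \<subseteq> U"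
  shows "Mod p \<mu> (curves_meeting E U) = Mod p \<mu> (curves_meeting E UNIV)"
proof (rule antisym)
  show "Mod p \<mu> (curves_meeting E U) \<le> Mod p \<mu> (curves_meeting E UNIV)"
    by (rule Mod_mono) (auto simp: curves_meeting_def)
  define B where "B = {c \<in> curves. \<not> openin (top_of_set {0..fst c}) ({0..fst c} \<inter> snd c -` U)}"
  have B0: "Mod p \<mu> B = 0" using assms(3) unfolding p_path_open_def B_def by simp
  show "Mod p \<mu> (curves_meeting E UNIV) \<le> Mod p \<mu> (curves_meeting E U)"
    unfolding Mod_def[of p \<mu> "curves_meeting E U"]
  proof (rule INF_greatest)
    fix \<rho>1 assume "\<rho>1 \<in> {\<rho>. admissible (curves_meeting E U) \<rho>}"
    then have a1: "admissible (curves_meeting E U) \<rho>1" by simp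
    show "Mod p \<mu> (curves_meeting E UNIV) \<le> (\<integral>\<^sup>+ x. epowr (\<rho>1 x) p \<partial>\<mu>)"
    proof (rule ennreal_le_epsilon)
      fix e :: real assume e: "0 < e"
      have "(INF \<rho> \<in> {\<rho>. admissible B \<rho>}. \<integral>\<^sup>+ x. epowr (\<rho> x) p \<partial>\<mu>) < ennreal e"
        using B0 e unfolding Mod_def by simp
      then obtain \<rho>2 where a2: "admissible B \<rho>2" and s2: "(\<integral>\<^sup>+ x. epowr (\<rho>2 x) p \<partial>\<mu>) < ennreal e"
        unfolding INF_less_iff by auto
      define \<rho> where "\<rho> x = max (\<rho>1 x) (\<rho>2 x)" for x
      have m1: "\<rho>1 \<in> borel_measurable borel" and m2: "\<rho>2 \<in> borel_measurable borel"
        using a1 a2 unfolding admissible_def by auto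
      have m: "\<rho> \<in> borel_measurable borel" unfolding \<rho>_def using borel_measurable_max[OF m2 m1] by simp
      have adm: "admissible (curves_meeting E UNIV) \<rho>"
        unfolding admissible_def
      proof (intro conjI m ballI)
        fix c assume cE: "c \<in> curves_meeting E UNIV"
        obtain l g where c: "c = (l,g)" by (cases c)
        have cc: "arclength_curve (l,g)" and t0: "\<exists>t0\<in>{0..l}. g t0 \<in> E"
          using cE unfolding c curves_meeting_def curves_def by auto
        have mono: "line_integral \<rho>' c \<le> line_integral \<rho> c" if "\<And>x. \<rho>' x \<le> \<rho> x" for \<rho>'
          unfolding line_integral_def
          by (rule nn_integral_mono) (auto intro: mult_right_mono that)
        show "1 \<le> line_integral \<rho> c"
        proof (cases "c \<in> B")
          case True
          then have "1 \<le> line_integral \<rho>2 c" using a2 unfolding admissible_def by auto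
          also have "\<dots> \<le> line_integral \<rho> c" by (rule mono) (simp add: \<rho>_def)
          finally show ?thesis .
        next
          case False
          then have op: "openin (top_of_set {0..l}) ({0..l} \<inter> g -` U)"
            using cE unfolding B_def c curves_meeting_def by auto
          obtain t0 where t0: "t0 \<in> {0..l}" "g t0 \<in> E" using t0 by auto
          then have "t0 \<in> {0..l} \<inter> g -` U" using assms(4) by auto
          then obtain d where d: "d > 0" "\<And>t. t \<in> {0..l} \<Longrightarrow> dist t t0 < d \<Longrightarrow> g t \<in> U"
            using op unfolding openin_euclidean_subtopology_iff by blast
          define a where "a = max 0 (t0 - d/2)"
          define b where "b = min l (t0 + d/2)"
          have l0: "l > 0" using cc unfolding arclength_curve_def by simp
          have ab: "0 \<le> a" "a < b" "b \<le> l" "a \<le> t0" "t0 \<le> b"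
            using t0 d l0 unfolding a_def b_def by auto
          have sc: "arclength_curve (b-a, \<lambda>t. g (a+t))" by (rule subcurve_curve[OF cc]) (use ab in auto)
          have inU: "g (a + t) \<in> U" if "t \<in> {0..b-a}" for t
            by (rule d(2)) (use that ab in \<open>auto simp: a_def b_def dist_real_def\<close>)
          have "g (a + (t0 - a)) \<in> E" using t0 by simp
          moreover have "t0 - a \<in> {0..b-a}" using ab by auto
          ultimately have "(b-a, \<lambda>t. g (a+t)) \<in> curves_meeting E U"
            proof -
            have "(\<lambda>t. g (a+t)) ` {0..b-a} \<subseteq> U" using inU by auto
            moreover have "g (a + (t0 - a)) \<in> (\<lambda>t. g (a+t)) ` {0..b-a}"
              using \<open>t0 - a \<in> {0..b-a}\<close> by (rule imageI)
            ultimately show ?thesis using sc \<open>g (a + (t0 - a)) \<in> E\<close>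
              unfolding curves_meeting_def curves_def by auto
          qed
          then have "1 \<le> line_integral \<rho>1 (b-a, \<lambda>t. g (a+t))" using a1 unfolding admissible_def by auto
          also have "\<dots> \<le> line_integral \<rho>1 c" unfolding c by (rule subcurve_integral[OF cc]) (use ab m1 in auto)
          also have "\<dots> \<le> line_integral \<rho> c" by (rule mono) (simp add: \<rho>_def)
          finally show ?thesis .
        qed
      qed
      have "Mod p \<mu> (curves_meeting E UNIV) \<le> (\<integral>\<^sup>+ x. epowr (\<rho> x) p \<partial>\<mu>)"
        unfolding Mod_def by (rule INF_lower) (use adm in simp)
      also have "\<dots> \<le> (\<integral>\<^sup>+ x. epowr (\<rho>1 x) p + epowr (\<rho>2 x) p \<partial>\<mu>)"
        by (rule nn_integral_mono) (simp add: \<rho>_def epowr_max)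
      also have "\<dots> = (\<integral>\<^sup>+ x. epowr (\<rho>1 x) p \<partial>\<mu>) + (\<integral>\<^sup>+ x. epowr (\<rho>2 x) p \<partial>\<mu>)"
        by (rule nn_integral_add; rule meas_mu[OF assms(2)];
            rule measurable_comp[OF _ epowr_meas, unfolded comp_def]) (use m1 m2 in auto)
      also have "\<dots> \<le> (\<integral>\<^sup>+ x. epowr (\<rho>1 x) p \<partial>\<mu>) + ennreal e"
        using s2 by (intro add_left_mono) simp
      finally show "Mod p \<mu> (curves_meeting E UNIV) \<le> (\<integral>\<^sup>+ x. epowr (\<rho>1 x) p \<partial>\<mu>) + ennreal e" .
    qed
  qed
qed

end
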